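(* For integers $m\ge1$ and $k\ge0$, $$\mu(N|_m,k,J)\equiv\begin{cases}1\pmod 2,&\text{if }k=0,\\ 0\pmod 2,&\text{if }k\ge1.\end{cases}$$
   Context: Let $N=\{0,1,2,\ldots\}$ and $J=\{(2n+1)2^{2k}-1 : n,k\in N\}=\{0,2,3,4,6,8,10,11,\ldots\}$. For an infinite set $A\subseteq N$, $A|_m$ denotes the set of the $m$ smallest elements of $A$. An involution on a finite set $A$ is a permutation $\sigma$ of $A$ with $\sigma=\sigma^{-1}$; its cycles are fixed points and transpositions $(c,d)$. A transposition $(c,d)$ is said to be in a set $B$ if $c+d\in B$. For a finite set $A\subseteq N$, an integer $k\ge0$ and a set $B\subseteq N$, $\mu(A,k,B)$ denotes the number of involutions of $A$ having exactly $k$ transpositions, all of which are in $B$. *)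

theory Defs
  imports "HOL-Combinatorics.Permutations"
begin

definition J :: "nat set" where
  "J = {(2*n+1) * 2^(2*k) - 1 | n k. True}"

definition first_m :: "nat set \<Rightarrow> nat \<Rightarrow> nat set" where
  "first_m A m = {a \<in> A. card {b \<in> A. b < a} < m}"

definition involutions :: "nat set \<Rightarrow> (nat \<Rightarrow> nat) set" where
  "involutions A = {\<sigma>. \<sigma> permutes A \<and> (\<forall>x. \<sigma> (\<sigma> x) = x)}"

definition transpositions_of :: "(nat \<Rightarrow> nat) \<Rightarrow> nat set \<Rightarrow> nat set set" where
  "transpositions_of \<sigma> A = {{c, \<sigma> c} | c. c \<in> A \<and> \<sigma> c \<noteq> c}"

definition mu :: "nat set \<Rightarrow> nat \<Rightarrow> nat set \<Rightarrow> nat" where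
  "mu A k B = card {\<sigma> \<in> involutions A.
      card (transpositions_of \<sigma> A) = k \<and>
      (\<forall>c \<in> A. \<sigma> c \<noteq> c \<longrightarrow> c + \<sigma> c \<in> B)}"

end

theory Submission
  imports Defs "HOL-Library.Z2" "HOL-Computational_Algebra.Polynomial"
begin

definition V :: "nat set \<Rightarrow> (nat \<Rightarrow> nat) set" where
  "V S = {\<sigma> \<in> involutions S. \<forall>c\<in>S. \<sigma> c \<noteq> c \<longrightarrow> c + \<sigma> c \<in> J}"

definition tr :: "(nat \<Rightarrow> nat) \<Rightarrow> nat set \<Rightarrow> nat" where
  "tr \<sigma> S = card (transpositions_of \<sigma> S)"

definition P :: "nat set \<Rightarrow> bit poly" where
  "P S = (\<Sum>\<sigma>\<in>V S. monom 1 (tr \<sigma> S))"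

lemma inv_iff: "\<sigma> \<in> involutions S \<longleftrightarrow> (\<forall>x. x \<notin> S \<longrightarrow> \<sigma> x = x) \<and> (\<forall>x. \<sigma> (\<sigma> x) = x)"
  unfolding involutions_def permutes_def by (auto; metis)

lemma V_iff: "\<sigma> \<in> V S \<longleftrightarrow> (\<forall>x. x \<notin> S \<longrightarrow> \<sigma> x = x) \<and> (\<forall>x. \<sigma> (\<sigma> x) = x)
   \<and> (\<forall>c\<in>S. \<sigma> c \<noteq> c \<longrightarrow> c + \<sigma> c \<in> J)"
  unfolding V_def inv_iff by auto

lemma finite_V: "finite S \<Longrightarrow> finite (V S)"
proof -
  assume "finite S"
  then have "finite {\<sigma>. \<sigma> permutes S}" by (rule finite_permutations)
  moreover have "V S \<subseteq> {\<sigma>. \<sigma> permutes S}" unfolding V_def involutions_def by auto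
  ultimately show ?thesis by (rule finite_subset[rotated])
qed

lemma coeff_P: "finite S \<Longrightarrow> coeff (P S) k = of_nat (mu S k J)"
proof -
  assume fin: "finite S"
  have "coeff (P S) k = (\<Sum>\<sigma>\<in>V S. if tr \<sigma> S = k then 1 else 0)"
    unfolding P_def coeff_sum coeff_monom by (rule sum.cong) auto
  also have "\<dots> = (\<Sum>\<sigma>\<in>{\<sigma>\<in>V S. tr \<sigma> S = k}. 1)"
    using finite_V[OF fin] by (rule sum.inter_filter[symmetric])
  also have "\<dots> = of_nat (card {\<sigma>\<in>V S. tr \<sigma> S = k})" by (simp only: sum_constant mult_1_right)
  also have "{\<sigma>\<in>V S. tr \<sigma> S = k} = {\<sigma> \<in> involutions S.
      card (transpositions_of \<sigma> S) = k \<and>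
      (\<forall>c \<in> S. \<sigma> c \<noteq> c \<longrightarrow> c + \<sigma> c \<in> J)}"
    unfolding V_def tr_def by auto
  finally show ?thesis unfolding mu_def .
qed

lemma P_empty: "P {} = 1"
proof -
  have "V {} = {id}" by (auto simp: V_iff fun_eq_iff)
  moreover have "transpositions_of id {} = {}" unfolding transpositions_of_def by auto
  ultimately show ?thesis unfolding P_def tr_def by simp
qed

lemma finite_transp: "finite A \<Longrightarrow> finite (transpositions_of \<sigma> A)"
proof -
  assume "finite A"
  moreover have "transpositions_of \<sigma> A \<subseteq> (\<lambda>c. {c, \<sigma> c}) ` A"
    unfolding transpositions_of_def by auto
  ultimately show ?thesis by (meson finite_imageI finite_subset)
qed

lemma V_fix: "{\<sigma>\<in>V S. \<sigma> v = v} = V (S - {v})"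
  by (auto simp: V_iff; metis DiffI empty_iff insert_iff)

lemma tr_fix: "\<sigma> v = v \<Longrightarrow> tr \<sigma> S = tr \<sigma> (S - {v})"
  unfolding tr_def transpositions_of_def by (rule arg_cong[where f=card]) auto

lemma V_move_bij:
  assumes "u \<noteq> v" "v \<in> S" "u \<in> S" "v + u \<in> J"
  shows "bij_betw (\<lambda>\<tau>. \<tau>(v:=u, u:=v)) (V (S - {v} - {u})) {\<sigma>\<in>V S. \<sigma> v = u}"
proof (rule bij_betw_byWitness[where f'="\<lambda>\<sigma>. \<sigma>(v:=v, u:=u)"])
  show "\<forall>a\<in>V (S - {v} - {u}). a(v := u, u := v, v := v, u := u) = a"
    by (auto simp: V_iff fun_eq_iff)
  show "\<forall>a'\<in>{\<sigma> \<in> V S. \<sigma> v = u}. a'(v := v, u := u, v := u, u := v) = a'"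
    unfolding V_iff by (auto simp: fun_eq_iff)
  show "(\<lambda>\<tau>. \<tau>(v := u, u := v)) ` V (S - {v} - {u}) \<subseteq> {\<sigma> \<in> V S. \<sigma> v = u}"
  proof
    fix x assume "x \<in> (\<lambda>\<tau>. \<tau>(v := u, u := v)) ` V (S - {v} - {u})"
    then obtain \<tau> where "\<tau> \<in> V (S - {v} - {u})" and x: "x = \<tau>(v := u, u := v)" by auto
    from this(1) have h1: "\<And>x. x \<notin> S - {v} - {u} \<Longrightarrow> \<tau> x = x" and h2: "\<And>x. \<tau> (\<tau> x) = x"
      and h3: "\<And>c. c \<in> S - {v} - {u} \<Longrightarrow> \<tau> c \<noteq> c \<Longrightarrow> c + \<tau> c \<in> J"
      unfolding V_iff by auto
    have tv: "\<tau> v = v" "\<tau> u = u" using h1 by auto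
    have nv: "\<And>x. x \<noteq> v \<Longrightarrow> \<tau> x \<noteq> v" "\<And>x. x \<noteq> u \<Longrightarrow> \<tau> x \<noteq> u"
      using h2 tv by metis+
    have "\<tau>(v := u, u := v) \<in> V S"
      unfolding V_iff using assms h1 h2 h3 nv by (auto simp: add.commute)
    then show "x \<in> {\<sigma> \<in> V S. \<sigma> v = u}" using assms x by simp
  qed
  show "(\<lambda>\<sigma>. \<sigma>(v := v, u := u)) ` {\<sigma> \<in> V S. \<sigma> v = u} \<subseteq> V (S - {v} - {u})"
  proof
    fix x assume "x \<in> (\<lambda>\<sigma>. \<sigma>(v := v, u := u)) ` {\<sigma> \<in> V S. \<sigma> v = u}"
    then obtain \<sigma> where "\<sigma> \<in> V S" and sv: "\<sigma> v = u" and x: "x = \<sigma>(v := v, u := u)" by auto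
    from this(1) have h1: "\<And>x. x \<notin> S \<Longrightarrow> \<sigma> x = x" and h2: "\<And>x. \<sigma> (\<sigma> x) = x"
      and h3: "\<And>c. c \<in> S \<Longrightarrow> \<sigma> c \<noteq> c \<Longrightarrow> c + \<sigma> c \<in> J"
      unfolding V_iff by auto
    have su: "\<sigma> u = v" using sv h2 by metis
    have nv: "\<And>x. x \<noteq> u \<Longrightarrow> \<sigma> x \<noteq> v" "\<And>x. x \<noteq> v \<Longrightarrow> \<sigma> x \<noteq> u"
      using h2 sv su by metis+
    show "x \<in> V (S - {v} - {u})"
      unfolding x V_iff using assms h1 h2 h3 nv by auto
  qed
qed

lemma tr_move:
  assumes "u \<noteq> v" "v \<in> S" "u \<in> S" "finite S" "\<tau> \<in> V (S - {v} - {u})"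
  shows "tr (\<tau>(v:=u, u:=v)) S = Suc (tr \<tau> (S - {v} - {u}))"
proof -
  have tv: "\<tau> v = v" "\<tau> u = u" using assms(1,5) unfolding V_iff by auto
  have inv: "\<And>x. \<tau> (\<tau> x) = x" "\<And>x. x \<notin> S - {v} - {u} \<Longrightarrow> \<tau> x = x" using assms(5) unfolding V_iff by auto
  have "transpositions_of (\<tau>(v:=u, u:=v)) S = insert {v,u} (transpositions_of \<tau> (S - {v} - {u}))"
    unfolding transpositions_of_def using assms(1-3) tv inv
    by (auto simp: insert_commute)
  moreover have "{v,u} \<notin> transpositions_of \<tau> (S - {v} - {u})"
    unfolding transpositions_of_def using inv tv by (auto simp: doubleton_eq_iff)
  ultimately show ?thesis unfolding tr_def using finite_transp[of "S - {v} - {u}" \<tau>] assms(4) by simp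
qed

lemma sigma_in_S: "\<sigma> \<in> V S \<Longrightarrow> v \<in> S \<Longrightarrow> \<sigma> v \<in> S"
  unfolding V_iff by metis

lemma deletion:
  assumes fin: "finite S" and vS: "v \<in> S"
  shows "P S = P (S - {v}) + monom 1 1 * (\<Sum>u\<in>{u\<in>S - {v}. v + u \<in> J}. P (S - {v} - {u}))"
proof -
  let ?m = "\<lambda>\<sigma>. monom (1::bit) (tr \<sigma> S)"
  have "P S = (\<Sum>u\<in>S. \<Sum>\<sigma>\<in>{\<sigma>\<in>V S. \<sigma> v = u}. ?m \<sigma>)"
    unfolding P_def
    by (rule sum.group[symmetric]) (use finite_V[OF fin] fin sigma_in_S[OF _ vS] in auto)
  also have "\<dots> = (\<Sum>\<sigma>\<in>{\<sigma>\<in>V S. \<sigma> v = v}. ?m \<sigma>) + (\<Sum>u\<in>S - {v}. \<Sum>\<sigma>\<in>{\<sigma>\<in>V S. \<sigma> v = u}. ?m \<sigma>)"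
    using fin vS by (simp add: sum.remove)
  also have "(\<Sum>\<sigma>\<in>{\<sigma>\<in>V S. \<sigma> v = v}. ?m \<sigma>) = P (S - {v})"
    unfolding V_fix P_def
    by (rule sum.cong) (auto simp: tr_fix[symmetric] V_iff)
  also have "(\<Sum>u\<in>S - {v}. \<Sum>\<sigma>\<in>{\<sigma>\<in>V S. \<sigma> v = u}. ?m \<sigma>)
      = (\<Sum>u\<in>S - {v}. if v + u \<in> J then monom 1 1 * P (S - {v} - {u}) else 0)"
  proof (rule sum.cong[OF refl])
    fix u assume u: "u \<in> S - {v}"
    show "(\<Sum>\<sigma>\<in>{\<sigma>\<in>V S. \<sigma> v = u}. ?m \<sigma>) = (if v + u \<in> J then monom 1 1 * P (S - {v} - {u}) else 0)"
    proof (cases "v + u \<in> J")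
      case True
      have "(\<Sum>\<sigma>\<in>{\<sigma>\<in>V S. \<sigma> v = u}. ?m \<sigma>) = (\<Sum>\<tau>\<in>V (S - {v} - {u}). ?m (\<tau>(v:=u, u:=v)))"
        using V_move_bij[of u v S] u vS True by (intro sum.reindex_bij_betw[symmetric]) auto
      also have "\<dots> = (\<Sum>\<tau>\<in>V (S - {v} - {u}). monom 1 1 * monom 1 (tr \<tau> (S - {v} - {u})))"
        by (rule sum.cong[OF refl]) (use u vS fin in \<open>simp add: tr_move mult_monom\<close>)
      also have "\<dots> = monom 1 1 * P (S - {v} - {u})"
        unfolding P_def by (simp add: sum_distrib_left)
      finally show ?thesis using True by simp
    next
      case False
      have e: "{\<sigma>\<in>V S. \<sigma> v = u} = {}"
        using False u unfolding V_iff by auto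
      show ?thesis using False by (subst e) simp
    qed
  qed
  also have "\<dots> = (\<Sum>u\<in>{u\<in>S - {v}. v + u \<in> J}. monom 1 1 * P (S - {v} - {u}))"
    by (rule sum.inter_filter[symmetric]) (use fin in simp)
  finally show ?thesis by (simp add: sum_distrib_left)
qed

lemma iso:
  assumes "finite S" "inj_on f S" "\<forall>x\<in>S. \<forall>y\<in>S. x \<noteq> y \<longrightarrow> (f x + f y \<in> J \<longleftrightarrow> x + y \<in> J)"
  shows "P (f ` S) = P S"
  using assms
proof (induction "card S" arbitrary: S rule: less_induct)
  case less
  show ?case
  proof (cases "S = {}")
    case True then show ?thesis by simp
  next
    case False
    then obtain v where vS: "v \<in> S" by auto
    have fin: "finite S" and inj: "inj_on f S" using less.prems by auto
    have e1: "f ` S - {f v} = f ` (S - {v})" using inj vS by (auto simp: inj_on_def)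
    have ih: "P (f ` T) = P T" if "T \<subseteq> S - {v}" for T
    proof -
      have "T \<subset> S" using that vS by auto
      then have "card T < card S" by (rule psubset_card_mono[OF fin])
      then show ?thesis using less.hyps[of T] less.prems that
        by (meson Diff_subset finite_subset inj_on_subset subset_iff)
    qed
    have c: "\<And>u. u \<in> S - {v} \<Longrightarrow> (f v + f u \<in> J \<longleftrightarrow> v + u \<in> J)"
      using less.prems(3) vS by auto
    have e2: "{u'\<in>f ` S - {f v}. f v + u' \<in> J} = f ` {u\<in>S - {v}. v + u \<in> J}"
      unfolding e1 using c by (auto simp: image_iff)
    have "P (f ` S) = P (f ` S - {f v}) + monom 1 1 * (\<Sum>u'\<in>{u'\<in>f ` S - {f v}. f v + u' \<in> J}. P (f ` S - {f v} - {u'}))"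
      using deletion[of "f ` S" "f v"] fin vS by auto
    also have "(\<Sum>u'\<in>{u'\<in>f ` S - {f v}. f v + u' \<in> J}. P (f ` S - {f v} - {u'}))
        = (\<Sum>u\<in>{u\<in>S - {v}. v + u \<in> J}. P (f ` S - {f v} - {f u}))"
      unfolding e2
    proof (subst sum.reindex)
      show "inj_on f {u \<in> S - {v}. v + u \<in> J}" using inj by (rule inj_on_subset) auto
    qed (simp add: o_def)
    also have "\<dots> = (\<Sum>u\<in>{u\<in>S - {v}. v + u \<in> J}. P (S - {v} - {u}))"
    proof (rule sum.cong[OF refl])
      fix u assume "u \<in> {u\<in>S - {v}. v + u \<in> J}"
      then have "f ` S - {f v} - {f u} = f ` (S - {v} - {u})" using inj vS by (auto simp: inj_on_def)
      then show "P (f ` S - {f v} - {f u}) = P (S - {v} - {u})" using ih[of "S - {v} - {u}"] by auto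
    qed
    also have "P (f ` S - {f v}) = P (S - {v})" using ih e1 by auto
    finally show ?thesis using deletion[OF fin vS] by simp
  qed
qed

abbreviation X :: "bit poly" where "X \<equiv> monom 1 1"

lemma bit_add_self: "(x::bit) + x = 0"
  by simp

lemma add_self: "(p::bit poly) + p = 0"
proof -
  have "coeff (p + p) n = 0" for n unfolding coeff_add by (rule bit_add_self)
  then show ?thesis by (simp only: poly_eq_iff coeff_0) simp
qed

lemma sq_add: "(p + q)^2 = p^2 + (q::bit poly)^2"
proof -
  have "(p + q)^2 = p^2 + (p*q + p*q) + q^2" by (simp add: power2_eq_square algebra_simps)
  then show ?thesis by (simp add: add_self)
qed

lemma sq_sum: "(\<Sum>x\<in>A. f x)^2 = (\<Sum>x\<in>A. (f x)^2 :: bit poly)"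
proof (cases "finite A")
  case True then show ?thesis by (induction A rule: finite_induct) (auto simp: sq_add)
next
  case False then show ?thesis by simp
qed

lemma sum_invol:
  fixes g :: "'a \<Rightarrow> bit poly"
  assumes "finite A" "\<And>x. x \<in> A \<Longrightarrow> \<iota> x \<in> A" "\<And>x. x \<in> A \<Longrightarrow> \<iota> (\<iota> x) = x"
    "\<And>x. x \<in> A \<Longrightarrow> g (\<iota> x) = g x"
  shows "sum g A = sum g {x\<in>A. \<iota> x = x}"
  using assms
proof (induction "card A" arbitrary: A rule: less_induct)
  case less
  show ?case
  proof (cases "\<exists>x\<in>A. \<iota> x \<noteq> x")
    case False
    then have "{x\<in>A. \<iota> x = x} = A" by auto
    then show ?thesis by simp
  next
    case True
    then obtain x where x: "x \<in> A" "\<iota> x \<noteq> x" by auto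
    let ?A = "A - {x, \<iota> x}"
    have ix: "\<iota> x \<in> A" using less.prems x by auto
    have sub: "?A \<subset> A" using x by auto
    have ih: "sum g ?A = sum g {y\<in>?A. \<iota> y = y}"
    proof (rule less.hyps)
      show "card ?A < card A" using sub less.prems(1) by (rule psubset_card_mono[rotated])
      show "finite ?A" using less.prems(1) by simp
      fix y assume y: "y \<in> ?A"
      have yA: "y \<in> A" "y \<noteq> x" "y \<noteq> \<iota> x" using y by auto
      have i1: "\<iota> (\<iota> y) = y" "\<iota> (\<iota> x) = x" using less.prems(3) yA(1) x(1) by auto
      have "\<iota> y \<in> A" using less.prems(2) yA(1) by auto
      moreover have "\<iota> y \<noteq> x" using i1 yA(3) by auto
      moreover have "\<iota> y \<noteq> \<iota> x" using i1 yA(2) by metis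
      ultimately show "\<iota> y \<in> ?A" by auto
      show "\<iota> (\<iota> y) = y" using y less.prems(3) by auto
      show "g (\<iota> y) = g y" using y less.prems(4) by auto
    qed
    have "sum g A = g x + g (\<iota> x) + sum g ?A"
    proof -
      have "sum g A = g x + sum g (A - {x})" using x less.prems(1) by (simp add: sum.remove)
      also have "sum g (A - {x}) = g (\<iota> x) + sum g (A - {x} - {\<iota> x})"
        using x ix less.prems(1) by (simp add: sum.remove)
      finally show ?thesis by (simp add: Diff_insert2[symmetric] add.assoc)
    qed
    also have "g x + g (\<iota> x) = 0" using less.prems(4)[OF x(1)] by (simp add: add_self)
    finally have "sum g A = sum g ?A" by simp
    moreover have "{y\<in>?A. \<iota> y = y} = {y\<in>A. \<iota> y = y}"
      using x less.prems(3)[OF x(1)] by auto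
    ultimately show ?thesis using ih by simp
  qed
qed

lemma sum_split_cancel:
  fixes h :: "'a \<Rightarrow> bit poly"
  assumes "finite A"
  shows "sum h A + sum h {x\<in>A. \<not> Q x} = sum h {x\<in>A. Q x}"
proof -
  have "sum h A = sum h {x\<in>A. Q x} + sum h {x\<in>A. \<not> Q x}"
    using assms by (subst sum.union_disjoint[symmetric]) (auto intro: sum.cong)
  then show ?thesis by (simp add: add.assoc add_self)
qed

lemma J_iff: "x \<in> J \<longleftrightarrow> (\<exists>n k. x + 1 = (2*n+1) * 4^k)"
proof -
  have "x \<in> J \<longleftrightarrow> (\<exists>n k. x = (2*n+1) * 4^k - 1)"
    unfolding J_def by (simp add: power_mult)
  also have "\<dots> \<longleftrightarrow> (\<exists>n k. x + 1 = (2*n+1) * 4^k)"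
  proof -
    have "\<And>n k. (2*n+1) * (4::nat)^k \<ge> 1" by (simp add: Suc_le_eq)
    then show ?thesis by (metis add_diff_cancel_right' le_add_diff_inverse2)
  qed
  finally show ?thesis .
qed

lemma J_even: "even x \<Longrightarrow> x \<in> J"
  unfolding J_iff by (rule exI[of _ "x div 2"], rule exI[of _ 0]) auto

lemma noeq: "(2*a+1) * 4^k \<noteq> (2*b+1) * 2 * (4::nat)^l"
proof (induction k arbitrary: l)
  case 0
  have "odd ((2*a+1) * 4^0::nat)" by simp
  moreover have "even ((2*b+1)*2*(4::nat)^l)" by simp
  ultimately show ?case by (metis (no_types))
next
  case (Suc k)
  show ?case
  proof (cases l)
    case 0
    have m1: "(2*a+1) * 4^Suc k mod 4 = (0::nat)" by simp
    have m2: "(2*b+1) * 2 * (4::nat)^0 mod 4 = 2" by (simp only: power_0 mult_1_right) presburger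
    show ?thesis
    proof
      assume "(2*a+1) * 4^Suc k = (2*b+1) * 2 * 4^l"
      then have "(2*a+1) * 4^Suc k mod 4 = (2*b+1) * 2 * (4::nat)^0 mod 4" using 0 by simp
      then show False unfolding m1 m2 by simp
    qed
  next
    case (Suc l')
    then show ?thesis using Suc.IH[of l'] by auto
  qed
qed

lemma decomp: "(n::nat) > 0 \<Longrightarrow> \<exists>a e. n = (2*a+1) * 2^e"
proof (induction n rule: less_induct)
  case (less n)
  show ?case
  proof (cases "even n")
    case True
    then obtain m where m: "n = 2*m" by auto
    then have "m < n" "m > 0" using less.prems by auto
    then obtain a e where "m = (2*a+1)*2^e" using less.IH[of m] by auto
    then show ?thesis using m by (intro exI[of _ a] exI[of _ "Suc e"]) auto
  next
    case False
    then obtain a where "n = 2*a+1" using oddE by blast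
    then show ?thesis by (intro exI[of _ a] exI[of _ 0]) auto
  qed
qed

lemma J_odd: "2*s+1 \<in> J \<longleftrightarrow> s \<notin> J"
proof
  assume "2*s+1 \<in> J"
  then obtain n k where nk: "2*s+1+1 = (2*n+1)*4^k" unfolding J_iff by blast
  show "s \<notin> J"
  proof
    assume "s \<in> J"
    then obtain n' k' where "s+1 = (2*n'+1)*4^k'" unfolding J_iff by blast
    then have "2*s+1+1 = (2*n'+1)*2*4^k'" by simp
    with nk noeq show False by metis
  qed
next
  assume sJ: "s \<notin> J"
  obtain a e where ae: "s + 1 = (2*a+1)*2^e" using decomp[of "s+1"] by auto
  show "2*s+1 \<in> J"
  proof (cases "even e")
    case True
    then obtain k where "e = 2*k" by auto
    then have "s + 1 = (2*a+1)*4^k" using ae by (simp add: power_mult)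
    then have "s \<in> J" unfolding J_iff by blast
    then show ?thesis using sJ by simp
  next
    case False
    then obtain k where k: "e = 2*k+1" using oddE by blast
    have "2*s+1+1 = (2*a+1)*2^(2*k+2)" using ae k by simp
    also have "\<dots> = (2*a+1)*4^(k+1)"
    proof -
      have "(2::nat)^(2*(k+1)) = (2^2)^(k+1)" by (rule power_mult)
      then show ?thesis by simp
    qed
    finally show ?thesis unfolding J_iff by blast
  qed
qed

definition s0 :: "nat \<Rightarrow> nat" where "s0 x = (if even x then x + 1 else x - 1)"

lemma s0_s0[simp]: "s0 (s0 x) = x"
  unfolding s0_def by auto

lemma inj_s0: "inj_on s0 A"
  by (metis inj_onI s0_s0)

lemma s0_adj: "s0 x + s0 y \<in> J \<longleftrightarrow> x + y \<in> J"
proof (cases "even x"; cases "even y")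
  assume "even x" "even y"
  then show ?thesis unfolding s0_def by (simp add: J_even)
next
  assume "even x" "odd y"
  moreover then have "y \<ge> 1" by (cases y) auto
  ultimately show ?thesis unfolding s0_def by simp
next
  assume "odd x" "even y"
  moreover then have "x \<ge> 1" by (cases x) auto
  ultimately show ?thesis unfolding s0_def by simp
next
  assume "odd x" "odd y"
  then show ?thesis unfolding s0_def by (simp add: J_even)
qed

lemma P_s0: "finite A \<Longrightarrow> P (s0 ` A) = P A"
  by (rule iso) (auto simp: inj_s0 s0_adj)

definition dbl :: "nat set \<Rightarrow> nat set" where
  "dbl B = (\<lambda>i. 2*i) ` B \<union> (\<lambda>i. 2*i+1) ` B"

lemma finite_dbl: "finite B \<Longrightarrow> finite (dbl B)"
  unfolding dbl_def by simp

lemma s0_even: "s0 (2*i) = 2*i+1" and s0_odd: "s0 (2*i+1) = 2*i"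
  unfolding s0_def by auto

lemma s0_dbl: "s0 ` dbl B = dbl B"
  unfolding dbl_def image_Un image_image s0_even s0_odd by auto

lemma dbl_minus: "dbl B - {2*i} - {2*i+1} = dbl (B - {i})"
  unfolding dbl_def by auto

lemma del_insert:
  assumes "finite U" "v \<notin> U"
  shows "P (insert v U) = P U + X * (\<Sum>u\<in>{u\<in>U. v + u \<in> J}. P (U - {u}))"
proof -
  have "P (insert v U) = P (insert v U - {v}) + X * (\<Sum>u\<in>{u\<in>insert v U - {v}. v + u \<in> J}. P (insert v U - {v} - {u}))"
    using deletion[of "insert v U" v] assms by simp
  moreover have "insert v U - {v} = U" using assms by auto
  ultimately show ?thesis by simp
qed

lemma split_sum:
  assumes fin: "finite C" and gh: "\<And>i. i \<in> C \<Longrightarrow> g (2*i) = h i \<and> g (2*i+1) = h i"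
  shows "(\<Sum>w\<in>{w\<in>dbl C. 2*c + w \<in> J}. g w) = (\<Sum>i\<in>{i\<in>C. c + i \<in> J}. (h i :: bit poly))"
proof -
  have e: "{w\<in>dbl C. 2*c + w \<in> J} = (\<lambda>i. 2*i) ` C \<union> (\<lambda>i. 2*i+1) ` {i\<in>C. c + i \<notin> J}"
  proof -
    have "\<And>i. 2*c + 2*i \<in> J" by (simp add: J_even)
    moreover have "\<And>i. 2*c + (2*i+1) \<in> J \<longleftrightarrow> c + i \<notin> J"
      using J_odd by (metis add.assoc distrib_left)
    ultimately show ?thesis unfolding dbl_def by auto
  qed
  have "(\<Sum>w\<in>{w\<in>dbl C. 2*c + w \<in> J}. g w)
      = (\<Sum>w\<in>(\<lambda>i. 2*i) ` C. g w) + (\<Sum>w\<in>(\<lambda>i. 2*i+1) ` {i\<in>C. c + i \<notin> J}. g w)"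
    unfolding e using fin by (intro sum.union_disjoint) (auto, presburger)
  also have "(\<Sum>w\<in>(\<lambda>i. 2*i) ` C. g w) = (\<Sum>i\<in>C. h i)"
    by (subst sum.reindex) (auto simp: inj_on_def gh)
  also have "(\<Sum>w\<in>(\<lambda>i. 2*i+1) ` {i\<in>C. c + i \<notin> J}. g w) = (\<Sum>i\<in>{i\<in>C. c + i \<notin> J}. h i)"
    by (subst sum.reindex) (auto simp: inj_on_def gh intro!: sum.cong simp del: One_nat_def)
  finally show ?thesis using sum_split_cancel[OF fin, of h "\<lambda>i. c + i \<in> J"] by simp
qed

lemma dbl_decomp: "b \<in> B \<Longrightarrow> dbl B = insert (2*b) (insert (2*b+1) (dbl (B - {b})))"
  unfolding dbl_def by auto

lemma notin_dbl: "b \<notin> B \<Longrightarrow> 2*b \<notin> dbl B \<and> 2*b+1 \<notin> dbl B"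
  unfolding dbl_def by (auto, presburger+)

lemma s0_Suc[simp]: "s0 (Suc (2*i)) = 2*i" and s0_2[simp]: "s0 (2*i) = Suc (2*i)"
  unfolding s0_def by auto

lemma s0_in: "w \<in> dbl B \<Longrightarrow> s0 w \<in> dbl B"
  using s0_dbl by blast

lemma s0_ne: "s0 w \<noteq> w"
  unfolding s0_def by (cases w) auto

lemma s0_img_minus: "s0 ` (dbl B - D) = dbl B - s0 ` D"
  by (metis image_set_diff inj_def inj_s0 s0_dbl)

lemma card_less: "finite B \<Longrightarrow> b \<in> B \<Longrightarrow> C \<subseteq> B - {b} \<Longrightarrow> card C < card B"
proof -
  assume a: "finite B" "b \<in> B" "C \<subseteq> B - {b}"
  then have "C \<subset> B" by auto
  then show ?thesis using a(1) by (rule psubset_card_mono[rotated])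
qed

lemma X_lemma: "finite B \<Longrightarrow> P (dbl B) = (P B)^2"
proof (induction "card B" arbitrary: B rule: less_induct)
  case less
  show ?case
  proof (cases "B = {}")
    case True then show ?thesis by (simp add: dbl_def P_empty)
  next
    case False
    then obtain b where b: "b \<in> B" by auto
    define B' where "B' = B - {b}"
    define T where "T = dbl B'"
    have finB': "finite B'" using less.prems B'_def by simp
    have finT: "finite T" using finB' T_def finite_dbl by simp
    have bB': "b \<notin> B'" using B'_def by simp
    have nT: "2*b \<notin> T" "2*b+1 \<notin> T" using notin_dbl[OF bB'] T_def by auto
    have dB: "dbl B = insert (2*b) (insert (2*b+1) T)" using dbl_decomp[OF b] B'_def T_def by simp
    have ih: "P (dbl C) = (P C)^2" if "C \<subseteq> B'" for C
    proof -
      have "card C < card B" using card_less[OF less.prems b] that B'_def by simp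
      moreover have "finite C" using that finB' finite_subset by blast
      ultimately show ?thesis using less.hyps by blast
    qed
    define W0 where "W0 = {w\<in>T. 2*b + w \<in> J}"
    define W1 where "W1 = {w\<in>T. 2*b+1 + w \<in> J}"
    define A1 where "A1 = (\<Sum>w\<in>W1. P (T - {w}))"
    define A2 where "A2 = (\<Sum>w\<in>W0. P (T - {w}))"
    define D where "D = (\<Sum>w\<in>W0. \<Sum>w'\<in>{w'\<in>T - {w}. 2*b+1 + w' \<in> J}. P (T - {w} - {w'}))"
    have finW0: "finite W0" using finT W0_def by simp
    have s1: "P (dbl B) = P (insert (2*b+1) T) + X * (\<Sum>w\<in>W0. P (insert (2*b+1) (T - {w})))"
    proof -
      have "P (dbl B) = P (insert (2*b+1) T) + X * (\<Sum>w\<in>{w\<in>insert (2*b+1) T. 2*b + w \<in> J}. P (insert (2*b+1) T - {w}))"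
        unfolding dB using del_insert[of "insert (2*b+1) T" "2*b"] finT nT by simp
      moreover have "{w\<in>insert (2*b+1) T. 2*b + w \<in> J} = W0"
      proof -
        have "2*(2*b)+1 \<notin> J" using J_odd[of "2*b"] J_even[of "2*b"] by simp
        moreover have "2*(2*b)+1 = 2*b + (2*b+1)" by simp
        ultimately have "2*b + (2*b+1) \<notin> J" by metis
        moreover have "2*b + (2*b+1) = Suc (4*b)" by simp
        ultimately have "Suc (4*b) \<notin> J" by metis
        then show ?thesis unfolding W0_def using nT by auto
      qed
      moreover have "(\<Sum>w\<in>W0. P (insert (2*b+1) T - {w})) = (\<Sum>w\<in>W0. P (insert (2*b+1) (T - {w})))"
        by (rule sum.cong) (use nT in \<open>auto simp: W0_def intro!: arg_cong[where f=P]\<close>)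
      ultimately show ?thesis by simp
    qed
    have s2: "P (insert (2*b+1) T) = P T + X * A1"
      unfolding A1_def W1_def using del_insert[OF finT nT(2)] by simp
    have s3: "(\<Sum>w\<in>W0. P (insert (2*b+1) (T - {w}))) = A2 + X * D"
    proof -
      have "(\<Sum>w\<in>W0. P (insert (2*b+1) (T - {w}))) =
         (\<Sum>w\<in>W0. P (T - {w}) + X * (\<Sum>w'\<in>{w'\<in>T - {w}. 2*b+1 + w' \<in> J}. P (T - {w} - {w'})))"
        by (rule sum.cong[OF refl]) (rule del_insert, use finT nT in auto)
      then show ?thesis unfolding A2_def D_def by (simp add: sum.distrib sum_distrib_left)
    qed
    have A12: "A1 = A2"
    proof -
      have W1: "W1 = s0 ` W0"
      proof
        show "s0 ` W0 \<subseteq> W1"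
        proof
          fix x assume "x \<in> s0 ` W0"
          then obtain w where w: "w \<in> W0" "x = s0 w" by auto
          have "s0 (2*b) + s0 w \<in> J" using w s0_adj[of "2*b" w] unfolding W0_def by simp
          then show "x \<in> W1" using w s0_in unfolding W0_def W1_def T_def by (auto simp: s0_even)
        qed
        show "W1 \<subseteq> s0 ` W0"
        proof
          fix x assume x: "x \<in> W1"
          have "s0 (2*b+1) + s0 x \<in> J" using x s0_adj[of "2*b+1" x] unfolding W1_def by auto
          then have "s0 x \<in> W0" using x s0_in unfolding W0_def W1_def T_def by (auto simp: s0_odd)
          then show "x \<in> s0 ` W0" by (metis image_eqI s0_s0)
        qed
      qed
      have "A1 = (\<Sum>w\<in>W0. P (T - {s0 w}))"
        unfolding A1_def W1 by (subst sum.reindex) (auto simp: inj_s0)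
      also have "\<dots> = A2" unfolding A2_def
      proof (rule sum.cong[OF refl])
        fix w assume "w \<in> W0"
        have "s0 ` (T - {w}) = T - {s0 w}" unfolding T_def using s0_img_minus[of B' "{w}"] by simp
        then show "P (T - {s0 w}) = P (T - {w})" using P_s0[of "T - {w}"] finT by simp
      qed
      finally show ?thesis .
    qed
    have Dv: "D = (\<Sum>i\<in>{i\<in>B'. b + i \<in> J}. P (dbl (B' - {i})))"
    proof -
      define Sg where "Sg = Sigma W0 (\<lambda>w. {w'\<in>T - {w}. 2*b+1 + w' \<in> J})"
      define \<iota> where "\<iota> = (\<lambda>(w::nat, w'::nat). (s0 w', s0 w))"
      define g where "g = (\<lambda>(w, w'). P (T - {w} - {w'}))"
      have finSg: "finite Sg" unfolding Sg_def using finW0 finT by auto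
      have "D = sum g Sg" unfolding D_def Sg_def g_def
        by (subst sum.Sigma) (use finW0 finT in auto)
      also have "\<dots> = sum g {p\<in>Sg. \<iota> p = p}"
      proof (rule sum_invol[OF finSg])
        fix p assume p: "p \<in> Sg"
        then obtain w w' where ww: "p = (w, w')" "w \<in> T" "w' \<in> T" "w \<noteq> w'" "2*b + w \<in> J" "2*b+1 + w' \<in> J"
          unfolding Sg_def W0_def by auto
        have a1: "2*b + s0 w' \<in> J" using s0_adj[of "2*b+1" w'] ww by (simp add: s0_odd)
        have a2: "2*b+1 + s0 w \<in> J" using s0_adj[of "2*b" w] ww by (simp add: s0_even)
        have n: "s0 w \<noteq> s0 w'" using ww(4) by (metis s0_s0)
        show "\<iota> p \<in> Sg" unfolding Sg_def W0_def \<iota>_def using ww a1 a2 n s0_in T_def by auto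
        show "\<iota> (\<iota> p) = p" unfolding \<iota>_def ww by simp
        have "s0 ` (T - {w} - {w'}) = T - {s0 w'} - {s0 w}"
          unfolding T_def using s0_img_minus[of B' "{w, w'}"] by (simp add: Diff_insert2[symmetric] insert_commute)
        then show "g (\<iota> p) = g p" unfolding g_def \<iota>_def ww using P_s0[of "T - {w} - {w'}"] finT by simp
      qed
      also have "{p\<in>Sg. \<iota> p = p} = (\<lambda>w. (w, s0 w)) ` W0"
      proof
        show "{p\<in>Sg. \<iota> p = p} \<subseteq> (\<lambda>w. (w, s0 w)) ` W0"
          unfolding Sg_def \<iota>_def by (auto simp: image_iff)
        show "(\<lambda>w. (w, s0 w)) ` W0 \<subseteq> {p\<in>Sg. \<iota> p = p}"
        proof
          fix x assume "x \<in> (\<lambda>w. (w, s0 w)) ` W0"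
          then obtain w where w: "w \<in> W0" "x = (w, s0 w)" by auto
          have "2*b+1 + s0 w \<in> J" using s0_adj[of "2*b" w] w unfolding W0_def by (simp add: s0_even)
          then show "x \<in> {p\<in>Sg. \<iota> p = p}" using w s0_in s0_ne[of w] unfolding Sg_def \<iota>_def W0_def T_def
            by auto
        qed
      qed
      also have "sum g ((\<lambda>w. (w, s0 w)) ` W0) = (\<Sum>w\<in>W0. P (T - {w} - {s0 w}))"
        by (subst sum.reindex) (auto simp: inj_on_def g_def)
      also have "\<dots> = (\<Sum>i\<in>{i\<in>B'. b + i \<in> J}. P (dbl (B' - {i})))"
        unfolding W0_def T_def
      proof (rule split_sum[OF finB'])
        fix i assume "i \<in> B'"
        show "P (dbl B' - {2*i} - {s0 (2*i)}) = P (dbl (B' - {i})) \<and> P (dbl B' - {2*i+1} - {s0 (2*i+1)}) = P (dbl (B' - {i}))"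
          using dbl_minus[of B' i] by (simp add: s0_even s0_odd Diff_insert2[symmetric] insert_commute)
      qed
      finally show ?thesis .
    qed
    have lhs: "P (dbl B) = (P B')^2 + X^2 * (\<Sum>i\<in>{i\<in>B'. b + i \<in> J}. (P (B' - {i}))^2)"
    proof -
      have "P (dbl B) = P T + X * X * D + (X * A2 + X * A2)"
        using s1 s2 s3 A12 by (simp add: algebra_simps)
      also have "X * A2 + X * A2 = 0" by (rule add_self)
      also have "P T = (P B')^2" using ih[of B'] T_def by simp
      also have "D = (\<Sum>i\<in>{i\<in>B'. b + i \<in> J}. (P (B' - {i}))^2)"
        unfolding Dv by (rule sum.cong[OF refl]) (rule ih, auto)
      finally show ?thesis by (simp add: power2_eq_square)
    qed
    have "P B = P B' + X * (\<Sum>i\<in>{i\<in>B'. b + i \<in> J}. P (B' - {i}))"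
    proof -
      have "B = insert b B'" using b B'_def by auto
      then show ?thesis using del_insert[OF finB' bB'] by simp
    qed
    then have "(P B)^2 = (P B')^2 + X^2 * (\<Sum>i\<in>{i\<in>B'. b + i \<in> J}. (P (B' - {i}))^2)"
      by (simp add: sq_add power_mult_distrib sq_sum)
    then show ?thesis using lhs by simp
  qed
qed

lemma Q_lemma: "finite B \<Longrightarrow> t \<notin> B \<Longrightarrow> P (insert (2*t) (dbl B)) = P (insert t B) * P B"
proof (induction "card B" arbitrary: B t rule: less_induct)
  case less
  have finB: "finite B" and tB: "t \<notin> B" using less.prems by auto
  have ih: "P (insert (2*i) (dbl (B - {i}))) = P B * P (B - {i})" if "i \<in> B" for i
  proof -
    have "card (B - {i}) < card B" using card_less[OF finB that, of "B - {i}"] by simp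
    then have "P (insert (2*i) (dbl (B - {i}))) = P (insert i (B - {i})) * P (B - {i})"
      using less.hyps[of "B - {i}" i] finB by auto
    moreover have "insert i (B - {i}) = B" using that by auto
    ultimately show ?thesis by simp
  qed
  have n2t: "2*t \<notin> dbl B" using notin_dbl[OF tB] by simp
  have "P (insert (2*t) (dbl B)) = P (dbl B) + X * (\<Sum>w\<in>{w\<in>dbl B. 2*t + w \<in> J}. P (dbl B - {w}))"
    using del_insert[OF finite_dbl[OF finB] n2t] .
  also have "(\<Sum>w\<in>{w\<in>dbl B. 2*t + w \<in> J}. P (dbl B - {w})) = (\<Sum>i\<in>{i\<in>B. t + i \<in> J}. P (insert (2*i) (dbl (B - {i}))))"
  proof (rule split_sum[OF finB])
    fix i assume i: "i \<in> B"
    have ni: "2*i \<notin> dbl (B - {i})" "2*i+1 \<notin> dbl (B - {i})" using notin_dbl[of i "B - {i}"] by auto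
    have e1: "dbl B - {2*i+1} = insert (2*i) (dbl (B - {i}))" using dbl_decomp[OF i] ni by auto
    have e2: "dbl B - {2*i} = s0 ` insert (2*i) (dbl (B - {i}))"
      using dbl_decomp[OF i] ni s0_dbl[of "B - {i}"] by auto
    show "P (dbl B - {2*i}) = P (insert (2*i) (dbl (B - {i}))) \<and> P (dbl B - {2*i+1}) = P (insert (2*i) (dbl (B - {i})))"
      using e1 e2 P_s0[of "insert (2*i) (dbl (B - {i}))"] finite_dbl[of "B - {i}"] finB by simp
  qed
  also have "\<dots> = (\<Sum>i\<in>{i\<in>B. t + i \<in> J}. P B * P (B - {i}))" by (rule sum.cong) (auto simp: ih)
  also have "P (dbl B) = P B * P B" using X_lemma[OF finB] by (simp add: power2_eq_square)
  finally have "P (insert (2*t) (dbl B)) = P B * (P B + X * (\<Sum>i\<in>{i\<in>B. t + i \<in> J}. P (B - {i})))"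
    by (simp add: sum_distrib_left algebra_simps)
  also have "P B + X * (\<Sum>i\<in>{i\<in>B. t + i \<in> J}. P (B - {i})) = P (insert t B)"
    using del_insert[OF finB tB] by simp
  finally show ?case by (simp add: mult.commute)
qed

lemma dbl_range: "dbl {0..<n} = {0..<2*n}"
proof
  show "dbl {0..<n} \<subseteq> {0..<2*n}" unfolding dbl_def by auto
  show "{0..<2*n} \<subseteq> dbl {0..<n}"
  proof
    fix x assume x: "x \<in> {0..<2*n}"
    have lt: "x div 2 \<in> {0..<n}" using x by auto
    show "x \<in> dbl {0..<n}"
    proof (cases "even x")
      case True
      then have "x = 2 * (x div 2)" by simp
      then show ?thesis unfolding dbl_def using lt by blast
    next
      case False
      then have "x = 2 * (x div 2) + 1" by simp
      then show ?thesis unfolding dbl_def using lt by blast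
    qed
  qed
qed

lemma P_range: "P {0..<m} = 1"
proof (induction m rule: less_induct)
  case (less m)
  show ?case
  proof (cases "m \<le> 1")
    case True
    then consider "m = 0" | "m = 1" by linarith
    then show ?thesis
    proof cases
      case 1 then show ?thesis by (simp add: P_empty)
    next
      case 2
      have "P (insert 0 {}) = 1" using del_insert[of "{}" 0] by (simp add: P_empty)
      moreover have "{0..<m} = insert 0 {}" using 2 by auto
      ultimately show ?thesis by simp
    qed
  next
    case False
    obtain n where n: "m = 2*n \<or> m = 2*n+1" by (metis dvd_mult_div_cancel odd_two_times_div_two_succ Suc_eq_plus1)
    have n1: "n \<ge> 1" using n False by auto
    have ihn: "P {0..<n} = 1" using less.IH[of n] n n1 by auto
    show ?thesis
    proof (cases "m = 2*n")
      case True
      then show ?thesis using X_lemma[of "{0..<n}"] dbl_range[of n] ihn by simp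
    next
      case False
      then have m: "m = 2*n+1" using n by auto
      have ihn1: "P {0..<Suc n} = 1" using less.IH[of "Suc n"] m n1 by auto
      have "{0..<m} = insert (2*n) (dbl {0..<n})" using m dbl_range[of n] by auto
      moreover have "insert n {0..<n} = {0..<Suc n}" by auto
      ultimately show ?thesis using Q_lemma[of "{0..<n}" n] ihn ihn1 by simp
    qed
  qed
qed

lemma first_m_range: "first_m UNIV m = {0..<m}"
proof -
  have "\<And>a. {b\<in>UNIV. b < a} = {..<a}" by auto
  then show ?thesis unfolding first_m_def by auto
qed

lemma of_nat_bit: "(of_nat n :: bit) = (if even n then 0 else 1)"
  by (induction n) auto

theorem theorem2p1:
  fixes m k :: nat
  assumes "m \<ge> 1"
  shows "mu (first_m UNIV m) k J mod 2 = (if k = 0 then 1 else 0)"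
proof -
  have "(of_nat (mu {0..<m} k J) :: bit) = coeff (P {0..<m}) k" by (rule coeff_P[symmetric]) simp
  also have "\<dots> = (if k = 0 then 1 else 0)" by (simp add: P_range)
  finally have "(of_nat (mu {0..<m} k J) :: bit) = (if k = 0 then 1 else 0)" .
  then show ?thesis unfolding first_m_range of_nat_bit
    by (cases "k = 0"; cases "even (mu {0..<m} k J)") (auto simp: odd_iff_mod_2_eq_one even_iff_mod_2_eq_zero)
qed

end
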